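(* There is a constant $c_2\in(0,\infty)$ such that for all $\beta\in(0,\infty)$, $\Delta\in(0,1)$, even $L\ge2$, $\theta^\star\in[0,2\pi)$ and $\alpha\in\{1,2,3\}$: if $\widetilde\chi_{\Delta,L}(\boldsymbol\theta)=1$ and $\tilde{\boldsymbol\theta}=(\tilde\theta_{\boldsymbol r})$ is obtained by setting $\tilde\theta_{\boldsymbol r}=\theta_{\boldsymbol r}$ for $\boldsymbol r$ with even $\alpha$-th coordinate and $\tilde\theta_{\boldsymbol r}=2\phi_\alpha-\theta_{\boldsymbol r}$ for $\boldsymbol r$ with odd $\alpha$-th coordinate (all $\tilde\theta_{\boldsymbol r}$ taken as real representatives within $\Delta$ of $\theta^\star$), then $$\bigl|\beta\mathscr H_L(\boldsymbol\theta)-\widetilde{\mathscr I}_{L,\alpha}(\tilde{\boldsymbol\theta})\bigr|\le c_2(\beta J)\Delta^3L^3.$$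
   Context: $\mathscr H_L(\boldsymbol\theta)=\frac J2\sum_{\boldsymbol r\in\mathbb T_L}\sum_{\gamma=1}^3(\cos(\theta_{\boldsymbol r}-\phi_\gamma)-\cos(\theta_{\boldsymbol r+\hat{\mathrm e}_\gamma}-\phi_\gamma))^2$ with $\phi_1=0,\phi_2=\tfrac{2\pi}3,\phi_3=-\tfrac{2\pi}3$, $J>0$. $\widetilde\chi_{\Delta,L}$ is the indicator that $|\theta_{\boldsymbol r}-\theta^\star|<\Delta$ (mod $2\pi$) for $\boldsymbol r$ with even $\alpha$-th coordinate and $|\theta_{\boldsymbol r}-(2\phi_\alpha-\theta^\star)|<\Delta$ for $\boldsymbol r$ with odd $\alpha$-th coordinate. With $q_1=\sin^2\theta^\star$, $q_2=\sin^2(\theta^\star-\tfrac{2\pi}3)$, $q_3=\sin^2(\theta^\star+\tfrac{2\pi}3)$, let $q^{(\alpha)}_{\gamma,\boldsymbol r}=q_\gamma$ if the $\alpha$-th coordinate of $\boldsymbol r$ is even, while for odd $\alpha$-th coordinate $q^{(\alpha)}_{\alpha,\boldsymbol r}=q_\alpha$ and the two values $q_{\gamma'}$, $\gamma'\ne\alpha$, are interchanged. Define $\widetilde{\mathscr I}_{L,\alpha}(\boldsymbol\theta)=\frac{\beta J}2\sum_{\boldsymbol r\in\mathbb T_L}\sum_{\gamma=1}^3q^{(\alpha)}_{\gamma,\boldsymbol r}(\theta_{\boldsymbol r}-\theta_{\boldsymbol r+\hat{\mathrm e}_\gamma})^2$. *)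

theory Defs
  imports Complex_Main
begin

type_synonym site = "nat \<times> nat \<times> nat"

definition torus :: "nat \<Rightarrow> site set" where
  "torus L = {0..<L} \<times> {0..<L} \<times> {0..<L}"

fun coord :: "nat \<Rightarrow> site \<Rightarrow> nat" where
  "coord g (a, b, c) = (if g = 1 then a else if g = 2 then b else c)"

fun shift :: "nat \<Rightarrow> nat \<Rightarrow> site \<Rightarrow> site" where
  "shift L g (a, b, c) =
     (if g = 1 then ((a + 1) mod L, b, c)
      else if g = 2 then (a, (b + 1) mod L, c)
      else (a, b, (c + 1) mod L))"

definition phi :: "nat \<Rightarrow> real" where
  "phi g = (if g = 1 then 0 else if g = 2 then 2 * pi / 3 else - 2 * pi / 3)"

definition H :: "real \<Rightarrow> nat \<Rightarrow> (site \<Rightarrow> real) \<Rightarrow> real" where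
  "H J L \<theta> = J / 2 * (\<Sum>r\<in>torus L. \<Sum>g\<in>{1,2,3::nat}.
      (cos (\<theta> r - phi g) - cos (\<theta> (shift L g r) - phi g))\<^sup>2)"

definition near_mod :: "real \<Rightarrow> real \<Rightarrow> real \<Rightarrow> bool" where
  "near_mod D x y \<longleftrightarrow> (\<exists>k::int. \<bar>x - y - 2 * pi * of_int k\<bar> < D)"

definition chi :: "real \<Rightarrow> nat \<Rightarrow> real \<Rightarrow> nat \<Rightarrow> (site \<Rightarrow> real) \<Rightarrow> bool" where
  "chi D L ts a \<theta> \<longleftrightarrow> (\<forall>r\<in>torus L.
      (even (coord a r) \<longrightarrow> near_mod D (\<theta> r) ts) \<and>
      (odd (coord a r) \<longrightarrow> near_mod D (\<theta> r) (2 * phi a - ts)))"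

definition q :: "real \<Rightarrow> nat \<Rightarrow> real" where
  "q ts g = (if g = 1 then (sin ts)\<^sup>2
             else if g = 2 then (sin (ts - 2 * pi / 3))\<^sup>2
             else (sin (ts + 2 * pi / 3))\<^sup>2)"

(* q^{(alpha)}_{gamma,r}; for gamma \<noteq> alpha in {1,2,3}, the other index is 6 - alpha - gamma *)
definition qa :: "real \<Rightarrow> nat \<Rightarrow> nat \<Rightarrow> site \<Rightarrow> real" where
  "qa ts a g r = (if even (coord a r) \<or> g = a then q ts g else q ts (6 - a - g))"

definition Itilde :: "real \<Rightarrow> real \<Rightarrow> real \<Rightarrow> nat \<Rightarrow> nat \<Rightarrow> (site \<Rightarrow> real) \<Rightarrow> real" where
  "Itilde \<beta> J ts L a \<theta> = \<beta> * J / 2 * (\<Sum>r\<in>torus L. \<Sum>g\<in>{1,2,3::nat}.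
      qa ts a g r * (\<theta> r - \<theta> (shift L g r))\<^sup>2)"

end

theory Submission imports Defs begin

lemma sin_lip: fixes a b :: real shows "\<bar>sin a - sin b\<bar> \<le> \<bar>a - b\<bar>"
proof -
  have "\<bar>sin a - sin b\<bar> = 2 * \<bar>sin ((a - b) / 2)\<bar> * \<bar>cos ((a + b) / 2)\<bar>"
    by (simp add: sin_diff_sin abs_mult)
  also have "\<dots> \<le> 2 * \<bar>(a - b) / 2\<bar> * 1"
    using abs_sin_x_le_abs_x[of "(a - b) / 2"] abs_cos_le_one[of "(a + b) / 2"]
    by (intro mult_mono) auto
  also have "\<dots> = \<bar>a - b\<bar>" by simp
  finally show ?thesis .

qed

lemma rem_le:
  fixes x y ts D psi :: real
  assumes x: "\<bar>x - ts\<bar> < D" and y: "\<bar>y - ts\<bar> < D" and xy: "x < y"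
  shows "\<bar>(cos (y - psi) + sin (ts - psi) * y) - (cos (x - psi) + sin (ts - psi) * x)\<bar> \<le> \<bar>y - x\<bar> * D"
proof -
  have "\<exists>z. x < z \<and> z < y \<and> (cos (y - psi) + sin (ts - psi) * y) - (cos (x - psi) + sin (ts - psi) * x)
     = (y - x) * (- sin (z - psi) + sin (ts - psi))"
    by (rule MVT2[OF xy]) (auto intro!: derivative_eq_intros)
  then obtain z where z: "x < z" "z < y" and eq: "(cos (y - psi) + sin (ts - psi) * y) - (cos (x - psi) + sin (ts - psi) * x)
     = (y - x) * (- sin (z - psi) + sin (ts - psi))" by blast
  have "\<bar>- sin (z - psi) + sin (ts - psi)\<bar> \<le> \<bar>(ts - psi) - (z - psi)\<bar>"
    using sin_lip[of "ts - psi" "z - psi"] by simp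
  also have "\<dots> \<le> D" using x y z by auto
  finally have "\<bar>- sin (z - psi) + sin (ts - psi)\<bar> \<le> D" .
  then show ?thesis unfolding eq abs_mult by (intro mult_left_mono) auto
qed

lemma rem_le2:
  fixes x y ts D psi :: real
  assumes x: "\<bar>x - ts\<bar> < D" and y: "\<bar>y - ts\<bar> < D"
  shows "\<bar>cos (x - psi) - cos (y - psi) + sin (ts - psi) * (x - y)\<bar> \<le> \<bar>x - y\<bar> * D"
proof -
  consider "x < y" | "x = y" | "y < x" by linarith
  then show ?thesis
  proof cases
    case 1 show ?thesis using rem_le[OF x y 1, of psi] by (simp add: abs_minus_commute algebra_simps)
  next
    case 3 show ?thesis using rem_le[OF y x 3, of psi] by (simp add: abs_minus_commute algebra_simps)
  qed simp
qed

lemma bond: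
  fixes x y ts D psi :: real
  assumes x: "\<bar>x - ts\<bar> < D" and y: "\<bar>y - ts\<bar> < D" and D1: "D < 1"
  shows "\<bar>(cos (x - psi) - cos (y - psi))\<^sup>2 - (sin (ts - psi))\<^sup>2 * (x - y)\<^sup>2\<bar> \<le> 12 * D ^ 3"
proof -
  define s where "s = sin (ts - psi)"
  define R where "R = cos (x - psi) - cos (y - psi) + s * (x - y)"
  define d where "d = x - y"
  have R: "\<bar>R\<bar> \<le> \<bar>d\<bar> * D" using rem_le2[OF x y, of psi] by (simp add: R_def s_def d_def)
  have d: "\<bar>d\<bar> \<le> 2 * D" using x y by (simp add: d_def)
  have s: "\<bar>s\<bar> \<le> 1" by (simp add: s_def)
  have D0: "0 \<le> D" using x by simp
  have eq: "(cos (x - psi) - cos (y - psi))\<^sup>2 - s\<^sup>2 * d\<^sup>2 = R * R - 2 * s * d * R"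
    by (simp add: R_def d_def power2_eq_square algebra_simps)
  have "\<bar>R * R - 2 * s * d * R\<bar> \<le> \<bar>R\<bar> * \<bar>R\<bar> + 2 * \<bar>s\<bar> * \<bar>d\<bar> * \<bar>R\<bar>"
    by (simp add: abs_mult abs_triangle_ineq4 [THEN order_trans] )
  also have "\<dots> \<le> (2*D*D) * (2*D*D) + 2 * 1 * (2*D) * (2*D*D)"
  proof -
    have R2: "\<bar>R\<bar> \<le> 2*D*D" using R d D0 by (smt (verit) mult_right_mono)
    show ?thesis
      by (intro add_mono mult_mono R2 s d) (use D0 in auto)
  qed
  also have "\<dots> \<le> 12 * D^3"
  proof -
    have "D*D*D*D \<le> D*D*D*1" using D0 D1 by (intro mult_left_mono) auto
    then show ?thesis by (simp add: power3_eq_cube algebra_simps)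
  qed
  finally show ?thesis using eq by (simp add: s_def d_def)
qed

definition psi :: "nat \<Rightarrow> site \<Rightarrow> nat \<Rightarrow> real" where
  "psi a r g = (if even (coord a r) \<or> g = a then phi g else 2 * phi a - phi g)"

lemma coord_shift:
  assumes "a \<in> {1,2,3}" "g \<in> {1,2,3}" "g \<noteq> a"
  shows "coord a (shift L g r) = coord a r"
  using assms by (cases r) auto

lemma shift_torus:
  assumes "r \<in> torus L"
  shows "shift L g r \<in> torus L"
  using assms by (cases r) (auto simp: torus_def)

lemma psi_shift:
  assumes "a \<in> {1,2,3}" "g \<in> {1,2,3}"
  shows "psi a (shift L g r) g = psi a r g"
  using coord_shift[OF assms, of L r] by (cases "g = a") (auto simp: psi_def)

lemma cos_per: "cos (x + 2 * pi * of_int k) = cos x"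
  by (simp add: cos_add)

lemma cos_site:
  assumes "(even (coord a r) \<longrightarrow> (\<exists>k::int. t' = t + 2 * pi * of_int k)) \<and>
           (odd (coord a r) \<longrightarrow> (\<exists>k::int. t' = 2 * phi a - t + 2 * pi * of_int k))"
  shows "cos (t - phi g) = cos (t' - psi a r g)"
proof (cases "even (coord a r)")
  case True
  then obtain k::int where k: "t' = t + 2 * pi * of_int k" using assms by blast
  have "cos (t' - psi a r g) = cos ((t - phi g) + 2 * pi * of_int k)"
    using True by (simp add: psi_def k algebra_simps)
  then show ?thesis by (simp add: cos_per)
next
  case False
  then obtain k::int where k: "t' = 2 * phi a - t + 2 * pi * of_int k" using assms by blast
  have ps: "psi a r g = 2 * phi a - phi g" using False by (auto simp: psi_def)
  have "cos (t' - psi a r g) = cos (- (t - phi g) + 2 * pi * of_int k)"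
    by (simp add: ps k algebra_simps)
  then show ?thesis by (simp add: cos_per) (metis cos_minus minus_diff_eq)
qed

lemma sin2_per: "(sin (x - 2 * pi))\<^sup>2 = (sin x)\<^sup>2" "(sin (x + 2 * pi))\<^sup>2 = (sin x)\<^sup>2"
  using sin_periodic[of "x - 2 * pi"] by auto

lemma qa_eq:
  assumes "a \<in> {1,2,3}" "g \<in> {1,2,3}"
  shows "qa ts a g r = (sin (ts - psi a r g))\<^sup>2"
proof (cases "even (coord a r) \<or> g = a")
  case True
  then show ?thesis using assms by (auto simp: qa_def psi_def q_def phi_def)
next
  case False
  then have *: "qa ts a g r = q ts (6 - a - g)" "psi a r g = 2 * phi a - phi g"
    by (auto simp: qa_def psi_def)
  have e1: "ts - (2 * (2 * pi / 3) - 0) = (ts + 2 * pi / 3) - 2 * pi" by simp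
  have e2: "ts - (2 * (2 * pi / 3) + 2 * pi / 3) = ts - 2 * pi" by simp
  have e3: "ts - (- (2 * (2 * pi) / 3) - 0) = (ts - 2 * pi / 3) + 2 * pi" by simp
  have e4: "ts - (- (2 * (2 * pi) / 3) - 2 * pi / 3) = ts + 2 * pi" by simp
  have "ts + 2*pi/3 = (ts - 4*pi/3) + 2*pi" by simp
  then have f5: "sin (ts + 2*pi/3) = sin (ts - 4*pi/3)" by (metis sin_periodic)
  have "ts + 4*pi/3 = (ts - 2*pi/3) + 2*pi" by simp
  then have f6: "sin (ts - 2*pi/3) = sin (ts + 4*pi/3)" by (metis sin_periodic)
  show ?thesis using assms False unfolding *
    by (auto simp: q_def phi_def e1 e2 e3 e4 sin2_per simp del: sin_periodic) (simp_all only: f5 f6)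
qed

lemma card_torus: "card (torus L) = L ^ 3"
  by (simp add: torus_def card_cartesian_product power3_eq_cube)

lemma finite_torus: "finite (torus L)"
  by (simp add: torus_def)

theorem lemma4p6:
  shows "\<exists>c2>0. \<forall>J>0. \<forall>\<beta>>0. \<forall>D L ts a \<theta> \<theta>'.
     0 < D \<and> D < 1 \<and> even L \<and> L \<ge> 2 \<and> 0 \<le> ts \<and> ts < 2 * pi \<and> a \<in> {1,2,3} \<and>
     chi D L ts a \<theta> \<and>
     (\<forall>r\<in>torus L. (even (coord a r) \<longrightarrow> (\<exists>k::int. \<theta>' r = \<theta> r + 2 * pi * of_int k)) \<and>
                   (odd (coord a r) \<longrightarrow> (\<exists>k::int. \<theta>' r = 2 * phi a - \<theta> r + 2 * pi * of_int k)) \<and>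
                   \<bar>\<theta>' r - ts\<bar> < D)
     \<longrightarrow> \<bar>\<beta> * H J L \<theta> - Itilde \<beta> J ts L a \<theta>'\<bar> \<le> c2 * (\<beta> * J) * D ^ 3 * real L ^ 3"
proof (intro exI[of _ 18] conjI allI impI)
  fix J \<beta> D :: real and L a ts \<theta> \<theta>'
  assume J: "J > 0" and b: "\<beta> > 0"
  assume hyp: "0 < D \<and> D < 1 \<and> even L \<and> L \<ge> 2 \<and> 0 \<le> ts \<and> ts < 2 * pi \<and> a \<in> {1,2,3} \<and>
     chi D L ts a \<theta> \<and>
     (\<forall>r\<in>torus L. (even (coord a r) \<longrightarrow> (\<exists>k::int. \<theta>' r = \<theta> r + 2 * pi * of_int k)) \<and>
                   (odd (coord a r) \<longrightarrow> (\<exists>k::int. \<theta>' r = 2 * phi a - \<theta> r + 2 * pi * of_int k)) \<and>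
                   \<bar>\<theta>' r - ts\<bar> < D)"
  then have D0: "0 < D" and D1: "D < 1" and a: "a \<in> {1,2,3}"
    and site: "\<And>r. r \<in> torus L \<Longrightarrow> (even (coord a r) \<longrightarrow> (\<exists>k::int. \<theta>' r = \<theta> r + 2 * pi * of_int k)) \<and>
                   (odd (coord a r) \<longrightarrow> (\<exists>k::int. \<theta>' r = 2 * phi a - \<theta> r + 2 * pi * of_int k))"
    and near: "\<And>r. r \<in> torus L \<Longrightarrow> \<bar>\<theta>' r - ts\<bar> < D"
    by auto
  define T where "T r g = (cos (\<theta> r - phi g) - cos (\<theta> (shift L g r) - phi g))\<^sup>2
       - qa ts a g r * (\<theta>' r - \<theta>' (shift L g r))\<^sup>2" for r g
  have bnd: "\<bar>T r g\<bar> \<le> 12 * D ^ 3" if r: "r \<in> torus L" and g: "g \<in> {1,2,3::nat}" for r g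
  proof -
    have rs: "shift L g r \<in> torus L" using shift_torus[OF r] .
    have "T r g = (cos (\<theta>' r - psi a r g) - cos (\<theta>' (shift L g r) - psi a r g))\<^sup>2
       - (sin (ts - psi a r g))\<^sup>2 * (\<theta>' r - \<theta>' (shift L g r))\<^sup>2"
      unfolding T_def qa_eq[OF a g]
      using cos_site[OF site[OF r], of g] cos_site[OF site[OF rs], of g] psi_shift[OF a g, of L r]
      by simp
    also have "\<bar>\<dots>\<bar> \<le> 12 * D ^ 3"
      by (rule bond[OF near[OF r] near[OF rs] D1])
    finally show ?thesis .
  qed
  have eq: "\<beta> * H J L \<theta> - Itilde \<beta> J ts L a \<theta>' = \<beta> * J / 2 * (\<Sum>r\<in>torus L. \<Sum>g\<in>{1,2,3::nat}. T r g)"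
    unfolding H_def Itilde_def T_def
    by (simp add: sum_subtractf right_diff_distrib)
  have "\<bar>\<Sum>r\<in>torus L. \<Sum>g\<in>{1,2,3::nat}. T r g\<bar> \<le> (\<Sum>r\<in>torus L. \<Sum>g\<in>{1,2,3::nat}. \<bar>T r g\<bar>)"
    by (rule order_trans[OF sum_abs]) (intro sum_mono sum_abs)
  also have "\<dots> \<le> (\<Sum>r\<in>torus L. \<Sum>g\<in>{1,2,3::nat}. 12 * D ^ 3)"
    by (intro sum_mono bnd) auto
  also have "\<dots> = real L ^ 3 * 36 * D ^ 3"
    by (simp add: card_torus)
  finally have S: "\<bar>\<Sum>r\<in>torus L. \<Sum>g\<in>{1,2,3::nat}. T r g\<bar> \<le> real L ^ 3 * 36 * D ^ 3" .
  have bJ: "0 \<le> \<beta> * J / 2" using J b by simp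
  have "\<bar>\<beta> * H J L \<theta> - Itilde \<beta> J ts L a \<theta>'\<bar> = \<beta> * J / 2 * \<bar>\<Sum>r\<in>torus L. \<Sum>g\<in>{1,2,3::nat}. T r g\<bar>"
    unfolding eq abs_mult using bJ by simp
  also have "\<dots> \<le> \<beta> * J / 2 * (real L ^ 3 * 36 * D ^ 3)"
    by (rule mult_left_mono[OF S bJ])
  also have "\<dots> = 18 * (\<beta> * J) * D ^ 3 * real L ^ 3" by simp
  finally show "\<bar>\<beta> * H J L \<theta> - Itilde \<beta> J ts L a \<theta>'\<bar> \<le> 18 * (\<beta> * J) * D ^ 3 * real L ^ 3" .
qed simp

end
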